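(* Let $G$ be a group generated by an arbitrary set of elements $S$, and let $T$ be a simplicial tree on which $G$ acts acylindrically by isometries. Suppose that for all distinct pairs $s_i,s_j\in S$, the elements $s_i$, $s_j$ and $s_is_j$ act elliptically on $T$. Then $G$ acts elliptically on $T$.
   Context: Groups are countable; actions on trees are simplicial without inversion. An action on a metric space $(X,d)$ is acylindrical if for every $\epsilon\ge0$ there are $R(\epsilon),N(\epsilon)\ge0$ such that for all $x,y$ with $d(x,y)\ge R(\epsilon)$, at most $N(\epsilon)$ elements $g$ satisfy $d(x,gx)\le\epsilon$ and $d(y,gy)\le\epsilon$. A subgroup acts elliptically on $T$ if it fixes a point of $T$ (equivalently has bounded orbits); an element acts elliptically if the cyclic subgroup it generates does. *)

theory Defs
  imports Complex_Main "HOL-Algebra.Group_Action" "HOL-Algebra.Generated_Groups" "HOL-Library.Countable_Set"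
begin

definition walk :: "'v set \<Rightarrow> ('v \<Rightarrow> 'v \<Rightarrow> bool) \<Rightarrow> 'v list \<Rightarrow> bool" where
  "walk V E xs \<longleftrightarrow> xs \<noteq> [] \<and> set xs \<subseteq> V \<and>
     (\<forall>i. Suc i < length xs \<longrightarrow> E (xs ! i) (xs ! Suc i))"

definition walk_between :: "'v set \<Rightarrow> ('v \<Rightarrow> 'v \<Rightarrow> bool) \<Rightarrow> 'v \<Rightarrow> 'v \<Rightarrow> 'v list \<Rightarrow> bool" where
  "walk_between V E x y xs \<longleftrightarrow> walk V E xs \<and> hd xs = x \<and> last xs = y"

definition simplicial_tree :: "'v set \<Rightarrow> ('v \<Rightarrow> 'v \<Rightarrow> bool) \<Rightarrow> bool" where
  "simplicial_tree V E \<longleftrightarrow>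
     V \<noteq> {} \<and>
     (\<forall>x y. E x y \<longrightarrow> x \<in> V \<and> y \<in> V) \<and>
     (\<forall>x y. E x y \<longrightarrow> E y x) \<and>
     (\<forall>x. \<not> E x x) \<and>
     (\<forall>x\<in>V. \<forall>y\<in>V. \<exists>!p. walk_between V E x y p \<and> distinct p)"

definition tree_dist :: "'v set \<Rightarrow> ('v \<Rightarrow> 'v \<Rightarrow> bool) \<Rightarrow> 'v \<Rightarrow> 'v \<Rightarrow> real" where
  "tree_dist V E x y = real (LEAST n. \<exists>p. walk_between V E x y p \<and> length p = Suc n)"

definition tree_action ::
  "('g, 'b) monoid_scheme \<Rightarrow> 'v set \<Rightarrow> ('v \<Rightarrow> 'v \<Rightarrow> bool) \<Rightarrow> ('g \<Rightarrow> 'v \<Rightarrow> 'v) \<Rightarrow> bool" where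
  "tree_action G V E \<phi> \<longleftrightarrow>
     group G \<and> simplicial_tree V E \<and> group_action G V \<phi> \<and>
     (\<forall>g\<in>carrier G. \<forall>x\<in>V. \<forall>y\<in>V. E (\<phi> g x) (\<phi> g y) \<longleftrightarrow> E x y) \<and>
     (\<forall>g\<in>carrier G. \<forall>x y. E x y \<longrightarrow> \<not> (\<phi> g x = y \<and> \<phi> g y = x))"

definition acylindrical_action ::
  "('g, 'b) monoid_scheme \<Rightarrow> 'v set \<Rightarrow> ('v \<Rightarrow> 'v \<Rightarrow> real) \<Rightarrow> ('g \<Rightarrow> 'v \<Rightarrow> 'v) \<Rightarrow> bool" where
  "acylindrical_action G X d \<phi> \<longleftrightarrow>
     (\<forall>\<epsilon>::real. \<epsilon> \<ge> 0 \<longrightarrow> (\<exists>R::real. \<exists>N::nat. R \<ge> 0 \<and>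
        (\<forall>x\<in>X. \<forall>y\<in>X. d x y \<ge> R \<longrightarrow>
           finite {g \<in> carrier G. d x (\<phi> g x) \<le> \<epsilon> \<and> d y (\<phi> g y) \<le> \<epsilon>} \<and>
           card {g \<in> carrier G. d x (\<phi> g x) \<le> \<epsilon> \<and> d y (\<phi> g y) \<le> \<epsilon>} \<le> N)))"

definition elliptic_subgroup :: "'v set \<Rightarrow> ('g \<Rightarrow> 'v \<Rightarrow> 'v) \<Rightarrow> 'g set \<Rightarrow> bool" where
  "elliptic_subgroup V \<phi> H \<longleftrightarrow> (\<exists>v\<in>V. \<forall>h\<in>H. \<phi> h v = v)"

definition elliptic_element ::
  "('g, 'b) monoid_scheme \<Rightarrow> 'v set \<Rightarrow> ('g \<Rightarrow> 'v \<Rightarrow> 'v) \<Rightarrow> 'g \<Rightarrow> bool" where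
  "elliptic_element G V \<phi> g \<longleftrightarrow> elliptic_subgroup V \<phi> (generate G {g})"

end

theory Submission
  imports Defs
begin


lemma walk_succ: "walk V E xs \<longleftrightarrow> xs \<noteq> [] \<and> set xs \<subseteq> V \<and> successively E xs"
  unfolding walk_def successively_conv_nth by blast

locale stree =
  fixes V :: "'v set" and E :: "'v \<Rightarrow> 'v \<Rightarrow> bool"
  assumes tree: "simplicial_tree V E"
begin

lemma symE: "E x y \<Longrightarrow> E y x" using tree unfolding simplicial_tree_def by blast
lemma EV: "E x y \<Longrightarrow> x \<in> V \<and> y \<in> V" using tree unfolding simplicial_tree_def by blast
lemma Vne: "V \<noteq> {}" using tree unfolding simplicial_tree_def by blast

definition tpath where "tpath x y = (THE p. walk_between V E x y p \<and> distinct p)"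

definition good where "good x y p \<longleftrightarrow> p \<noteq> [] \<and> set p \<subseteq> V \<and> successively E p \<and> hd p = x \<and> last p = y \<and> distinct p"

lemma good_iff: "good x y p \<longleftrightarrow> walk_between V E x y p \<and> distinct p"
  unfolding good_def walk_between_def walk_succ by blast

lemma ex1: "x \<in> V \<Longrightarrow> y \<in> V \<Longrightarrow> \<exists>!p. good x y p"
  using tree unfolding simplicial_tree_def good_iff by blast

lemma tpath: "x \<in> V \<Longrightarrow> y \<in> V \<Longrightarrow> good x y (tpath x y)"
  unfolding tpath_def good_iff[symmetric] using ex1 by (metis theI')

lemma tpath_unique: "x \<in> V \<Longrightarrow> y \<in> V \<Longrightarrow> good x y p \<Longrightarrow> tpath x y = p"
  using ex1 tpath by blast

lemma good_unique: "good x y p \<Longrightarrow> good x y q \<Longrightarrow> p = q"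
  by (metis good_def hd_in_set last_in_set subsetD tpath_unique)

lemma tpath_rev: "x \<in> V \<Longrightarrow> y \<in> V \<Longrightarrow> tpath y x = rev (tpath x y)"
proof -
  assume xy: "x \<in> V" "y \<in> V"
  have "good x y (tpath x y)" using tpath xy by blast
  hence "good y x (rev (tpath x y))" unfolding good_def
    by (auto simp: hd_rev last_rev intro: successively_mono symE)
  thus ?thesis using tpath_unique xy by blast
qed

lemma lcp: "\<exists>q r s. P = q @ r \<and> Q = q @ s \<and> (r = [] \<or> s = [] \<or> hd r \<noteq> hd s)"
proof (induction P arbitrary: Q)
  case Nil then show ?case by auto
next
  case (Cons a P)
  show ?case
  proof (cases "Q \<noteq> [] \<and> hd Q = a")
    case True
    then obtain Q' where Q: "Q = a # Q'" by (cases Q) auto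
    from Cons.IH[of Q'] obtain q r s where "P = q @ r" "Q' = q @ s" "r = [] \<or> s = [] \<or> hd r \<noteq> hd s" by blast
    then show ?thesis using Q by (intro exI[of _ "a # q"] exI[of _ r] exI[of _ s]) auto
  next
    case False then show ?thesis by (intro exI[of _ "[]"] exI[of _ "a # P"] exI[of _ Q]) auto
  qed
qed

lemma good_prefix: "good x y (a @ b) \<Longrightarrow> a \<noteq> [] \<Longrightarrow> good x (last a) a"
  unfolding good_def by (auto simp: successively_append_iff)

lemma good_suffix: "good x y (a @ b) \<Longrightarrow> b \<noteq> [] \<Longrightarrow> good (hd b) y b"
  unfolding good_def by (auto simp: successively_append_iff)

lemma split:
  assumes V: "p \<in> V" "x \<in> V" "y \<in> V"
  shows "\<exists>q r s. tpath p x = q @ r \<and> tpath p y = q @ s \<and> q \<noteq> [] \<and> tpath x y = rev r @ last q # s"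
proof -
  obtain q r s where P: "tpath p x = q @ r" and Q: "tpath p y = q @ s" and dv: "r = [] \<or> s = [] \<or> hd r \<noteq> hd s"
    using lcp by blast
  have gP: "good p x (q @ r)" using tpath V P by metis
  have gQ: "good p y (q @ s)" using tpath V Q by metis
  have qne: "q \<noteq> []"
  proof
    assume "q = []"
    then show False using gP gQ dv unfolding good_def by auto
  qed
  define c where "c = last q"
  obtain q' where q': "q = q' @ [c]" using qne c_def by (metis append_butlast_last_id)
  have gr: "good c x (c # r)" using good_suffix[of p x q' "c # r"] gP q' by auto
  have gs: "good c y (c # s)" using good_suffix[of p y q' "c # s"] gQ q' by auto
  have disj: "set r \<inter> set s = {}"
  proof (rule ccontr)
    assume "set r \<inter> set s \<noteq> {}"
    then obtain z where z: "z \<in> set r" "z \<in> set s" by blast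
    obtain r1 r2 where r: "r = r1 @ z # r2" using z split_list by metis
    obtain s1 s2 where s: "s = s1 @ z # s2" using z split_list by metis
    have g1: "good c z (c # r1 @ [z])" using good_prefix[of c x "c # r1 @ [z]" r2] gr r by auto
    have g2: "good c z (c # s1 @ [z])" using good_prefix[of c y "c # s1 @ [z]" s2] gs s by auto
    have "r1 = s1" using good_unique[OF g1 g2] by simp
    then have "hd r = hd s" using r s by (cases r1) auto
    moreover have "r \<noteq> []" "s \<noteq> []" using r s by auto
    ultimately show False using dv by blast
  qed
  have W: "good x y (rev r @ c # s)"
  proof -
    have "successively (\<lambda>a b. E b a) (c # r)"
      using gr unfolding good_def by (auto elim: successively_mono intro: symE)
    then have s1: "successively E (rev r @ [c])"
      by (metis rev.simps(2) successively_rev)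
    have s2: "successively E (c # s)" using gs unfolding good_def by auto
    have "successively E (rev r @ c # s)"
      using s1 s2 by (auto simp: successively_append_iff successively_Cons split: if_splits)
    moreover have "hd (rev r @ c # s) = x"
      using gr unfolding good_def by (cases r rule: rev_cases) auto
    moreover have "last (rev r @ c # s) = y"
      using gs unfolding good_def by (cases s rule: rev_cases) auto
    moreover have "distinct (rev r @ c # s)"
      using gr gs disj unfolding good_def by auto
    moreover have "set (rev r @ c # s) \<subseteq> V"
      using gr gs unfolding good_def by auto
    ultimately show ?thesis unfolding good_def by auto
  qed
  show ?thesis using tpath_unique[OF V(2,3) W] P Q qne c_def by blast
qed

definition dn where "dn x y = length (tpath x y) - 1"

lemma shorten: "walk_between V E x y p \<Longrightarrow> \<exists>p'. good x y p' \<and> length p' \<le> length p"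
proof (induction "length p" arbitrary: p rule: less_induct)
  case less
  show ?case
  proof (cases "distinct p")
    case True then show ?thesis using less.prems good_iff by blast
  next
    case False
    then obtain a b c z where p: "p = a @ [z] @ b @ [z] @ c" using not_distinct_decomp by blast
    let ?p = "a @ [z] @ c"
    have "walk_between V E x y ?p"
      using less.prems unfolding p walk_between_def walk_succ
      by (auto simp: successively_append_iff successively_Cons hd_append split: if_splits)
    moreover have "length ?p < length p" using p by simp
    ultimately show ?thesis using less.hyps by fastforce
  qed
qed

lemma tree_dist_dn: assumes "x \<in> V" "y \<in> V" shows "tree_dist V E x y = real (dn x y)"
proof -
  have g: "good x y (tpath x y)" using tpath assms by blast
  have "(LEAST n. \<exists>p. walk_between V E x y p \<and> length p = Suc n) = dn x y"
  proof (rule Least_equality)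
    show "\<exists>p. walk_between V E x y p \<and> length p = Suc (dn x y)"
    proof -
      have ne: "tpath x y \<noteq> []" using g unfolding good_def by blast
      have "walk_between V E x y (tpath x y)" using g good_iff by blast
      then show ?thesis using ne unfolding dn_def by (intro exI[of _ "tpath x y"]) auto
    qed
  next
    fix n assume "\<exists>p. walk_between V E x y p \<and> length p = Suc n"
    then obtain p where "walk_between V E x y p" "length p = Suc n" by blast
    then obtain p' where "good x y p'" "length p' \<le> Suc n" using shorten by fastforce
    then show "dn x y \<le> n" using tpath_unique assms unfolding dn_def by fastforce
  qed
  then show ?thesis unfolding tree_dist_def by simp
qed

lemma prefix_dn:
  assumes "x \<in> V" "w \<in> V" "m \<in> set (tpath x w)"
  shows "dn x m \<le> dn x w \<and> (dn x m = dn x w \<longrightarrow> m = w)"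
proof -
  obtain a b where ab: "tpath x w = a @ m # b" using assms(3) split_list by metis
  have g: "good x w (a @ m # b)" using tpath assms ab by metis
  have g2: "good x m (a @ [m])" using good_prefix[of x w "a @ [m]" b] g by simp
  have mV: "m \<in> V" using g unfolding good_def by auto
  have "tpath x m = a @ [m]" using tpath_unique[OF assms(1) mV g2] .
  then have "dn x m = length a" "dn x w = length a + length b" using ab unfolding dn_def by auto
  moreover have "b = [] \<Longrightarrow> m = w" using g unfolding good_def by auto
  ultimately show ?thesis by auto
qed

lemma median:
  assumes "a \<in> V" "b \<in> V" "c \<in> V"
  shows "\<exists>m. m \<in> set (tpath a b) \<and> m \<in> set (tpath a c) \<and> m \<in> set (tpath b c)"
proof -
  obtain q r s where "tpath a b = q @ r" "tpath a c = q @ s" "q \<noteq> []" "tpath b c = rev r @ last q # s"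
    using split[OF assms] by blast
  then show ?thesis by (intro exI[of _ "last q"]) auto
qed

definition convex where "convex C \<longleftrightarrow> C \<subseteq> V \<and> (\<forall>x\<in>C. \<forall>y\<in>C. set (tpath x y) \<subseteq> C)"

lemma nearest_unique:
  assumes C: "convex C" and x: "x \<in> V" and w: "w \<in> C" and z: "z \<in> C"
    and dw: "dn x w = k" and dz: "dn x z = k" and mn: "\<forall>u\<in>C. k \<le> dn x u"
  shows "w = z"
proof -
  have V: "w \<in> V" "z \<in> V" using C w z unfolding convex_def by auto
  obtain m where m: "m \<in> set (tpath x w)" "m \<in> set (tpath x z)" "m \<in> set (tpath w z)"
    using median[OF x V] by blast
  have "m \<in> C" using C w z m(3) unfolding convex_def by blast
  then have "k \<le> dn x m" using mn by blast
  then have "m = w" "m = z" using prefix_dn[OF x V(1) m(1)] prefix_dn[OF x V(2) m(2)] dw dz by auto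
  then show ?thesis by simp
qed

lemma triple:
  assumes "convex A" "convex B" "convex C" "A \<inter> B \<noteq> {}" "A \<inter> C \<noteq> {}" "B \<inter> C \<noteq> {}"
  shows "A \<inter> B \<inter> C \<noteq> {}"
proof -
  obtain c where c: "c \<in> A" "c \<in> B" using assms by blast
  obtain b where b: "b \<in> A" "b \<in> C" using assms by blast
  obtain a where a: "a \<in> B" "a \<in> C" using assms by blast
  have V: "a \<in> V" "b \<in> V" "c \<in> V" using assms a b c unfolding convex_def by auto
  obtain m where m: "m \<in> set (tpath a b)" "m \<in> set (tpath a c)" "m \<in> set (tpath b c)"
    using median[OF V] by blast
  have "m \<in> A" using assms(1) b c m(3) unfolding convex_def by blast
  moreover have "m \<in> B" using assms(2) a c m(2) unfolding convex_def by blast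
  moreover have "m \<in> C" using assms(3) a b m(1) unfolding convex_def by blast
  ultimately show ?thesis by blast
qed

lemma convex_Int: "convex A \<Longrightarrow> convex B \<Longrightarrow> convex (A \<inter> B)"
  unfolding convex_def by blast

lemma helly:
  "finite \<C> \<Longrightarrow> (\<forall>A\<in>\<C>. convex A) \<Longrightarrow> (\<forall>A\<in>\<C>. \<forall>B\<in>\<C>. A \<inter> B \<noteq> {}) \<Longrightarrow> \<exists>v\<in>V. \<forall>A\<in>\<C>. v \<in> A"
proof (induction "card \<C>" arbitrary: \<C> rule: less_induct)
  case less
  show ?case
  proof (cases "\<exists>A B. A \<in> \<C> \<and> B \<in> \<C> \<and> A \<noteq> B")
    case False
    show ?thesis
    proof (cases "\<C> = {}")
      case True then show ?thesis using Vne by auto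
    next
      case F: False
      then obtain A where A: "A \<in> \<C>" by blast
      then have "\<C> = {A}" using False by blast
      moreover obtain v where "v \<in> A" using less.prems A by blast
      moreover have "A \<subseteq> V" using less.prems A unfolding convex_def by blast
      ultimately show ?thesis by blast
    qed
  next
    case True
    then obtain A B where AB: "A \<in> \<C>" "B \<in> \<C>" "A \<noteq> B" by blast
    define \<C>' where "\<C>' = insert (A \<inter> B) (\<C> - {A, B})"
    have fin: "finite \<C>'" using less.prems unfolding \<C>'_def by auto
    have c2: "card {A, B} = 2" using AB by simp
    have sub: "{A, B} \<subseteq> \<C>" using AB by simp
    have cd: "card (\<C> - {A, B}) = card \<C> - 2" using card_Diff_subset[OF _ sub] c2 by simp
    have ge: "2 \<le> card \<C>" using card_mono[OF less.prems(1) sub] c2 by simp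
    have "card \<C>' \<le> Suc (card (\<C> - {A, B}))" unfolding \<C>'_def
      using less.prems(1) by (simp add: card_insert_if)
    then have lt: "card \<C>' < card \<C>" using cd ge by simp
    have cv: "\<forall>X\<in>\<C>'. convex X" unfolding \<C>'_def using less.prems(2) AB(1,2) by (auto intro: convex_Int)
    have pw: "\<forall>X\<in>\<C>'. \<forall>Y\<in>\<C>'. X \<inter> Y \<noteq> {}"
    proof (intro ballI)
      fix X Y assume X: "X \<in> \<C>'" and Y: "Y \<in> \<C>'"
      have tr: "A \<inter> B \<inter> D \<noteq> {}" if D: "D \<in> \<C>" for D
      proof -
        have "convex A" "convex B" "convex D" using less.prems(2) AB(1,2) D by auto
        moreover have "A \<inter> B \<noteq> {}" "A \<inter> D \<noteq> {}" "B \<inter> D \<noteq> {}"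
          using less.prems(3) AB(1,2) D by auto
        ultimately show ?thesis by (rule triple)
      qed
      show "X \<inter> Y \<noteq> {}"
      proof (cases "X = A \<inter> B")
        case True
        show ?thesis
        proof (cases "Y = A \<inter> B")
          case True then show ?thesis using `X = A \<inter> B` less.prems(3) AB by auto
        next
          case False then have "Y \<in> \<C>" using Y unfolding \<C>'_def by auto
          then show ?thesis using tr True by (simp add: Int_assoc)
        qed
      next
        case False then have X': "X \<in> \<C>" using X unfolding \<C>'_def by auto
        show ?thesis
        proof (cases "Y = A \<inter> B")
          case True then show ?thesis using tr[OF X'] by (simp add: Int_ac)
        next
          case False then have "Y \<in> \<C>" using Y unfolding \<C>'_def by auto
          then show ?thesis using X' less.prems(3) by blast
        qed
      qed
    qed
    obtain v where "v \<in> V" "\<forall>X\<in>\<C>'. v \<in> X" using less.hyps[OF lt fin cv pw] by blast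
    then have "\<forall>X\<in>\<C>. v \<in> X" unfolding \<C>'_def by auto
    then show ?thesis using \<open>v \<in> V\<close> by blast
  qed
qed

end


locale tact = stree V E + group_action G V \<phi>
  for G :: "('g, 'b) monoid_scheme" and V :: "'v set" and E and \<phi> +
  assumes pres: "\<forall>g\<in>carrier G. \<forall>x\<in>V. \<forall>y\<in>V. E (\<phi> g x) (\<phi> g y) \<longleftrightarrow> E x y"
begin

lemma tpath_map:
  assumes g: "g \<in> carrier G" and xy: "x \<in> V" "y \<in> V"
  shows "tpath (\<phi> g x) (\<phi> g y) = map (\<phi> g) (tpath x y)"
proof -
  have gp: "good x y (tpath x y)" using tpath xy by blast
  have sV: "set (tpath x y) \<subseteq> V" using gp unfolding good_def by blast
  have "good (\<phi> g x) (\<phi> g y) (map (\<phi> g) (tpath x y))"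
    unfolding good_def
  proof (intro conjI)
    show "map (\<phi> g) (tpath x y) \<noteq> []" using gp unfolding good_def by simp
    show "set (map (\<phi> g) (tpath x y)) \<subseteq> V" using sV element_image g by auto
    show "successively E (map (\<phi> g) (tpath x y))"
      unfolding successively_map using gp sV pres g unfolding good_def
      by (auto elim!: successively_mono)
    show "hd (map (\<phi> g) (tpath x y)) = \<phi> g x" using gp unfolding good_def by (simp add: hd_map)
    show "last (map (\<phi> g) (tpath x y)) = \<phi> g y" using gp unfolding good_def by (simp add: last_map)
    show "distinct (map (\<phi> g) (tpath x y))"
      using gp sV inj_prop[OF g] unfolding good_def by (simp add: distinct_map inj_on_subset)
  qed
  then show ?thesis using tpath_unique element_image g xy by blast
qed

lemma fix_convex:
  assumes "H \<subseteq> carrier G"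
  shows "convex {v\<in>V. \<forall>h\<in>H. \<phi> h v = v}"
  unfolding convex_def
proof (intro conjI ballI subsetI)
  fix x y v assume x: "x \<in> {v\<in>V. \<forall>h\<in>H. \<phi> h v = v}" and y: "y \<in> {v\<in>V. \<forall>h\<in>H. \<phi> h v = v}"
    and v: "v \<in> set (tpath x y)"
  have vV: "v \<in> V" using tpath[of x y] x y v unfolding good_def by auto
  have "\<forall>h\<in>H. \<phi> h v = v"
  proof
    fix h assume h: "h \<in> H"
    then have "map (\<phi> h) (tpath x y) = tpath x y"
      using tpath_map[of h x y] assms x y by auto
    then show "\<phi> h v = v" using v by (metis map_eq_conv map_ident)
  qed
  then show "v \<in> {v\<in>V. \<forall>h\<in>H. \<phi> h v = v}" using vV by blast
qed auto

definition mid where "mid l = l ! (length l div 2)"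

lemma midpoint:
  assumes g: "g \<in> carrier G" and p: "p \<in> V" "\<phi> g p = p" and x: "x \<in> V"
  shows "odd (length (tpath x (\<phi> g x))) \<and> \<phi> g (mid (tpath x (\<phi> g x))) = mid (tpath x (\<phi> g x))
     \<and> mid (tpath x (\<phi> g x)) \<in> V"
proof -
  have gx: "\<phi> g x \<in> V" using element_image g x by blast
  obtain q r s where P: "tpath p x = q @ r" and Q: "tpath p (\<phi> g x) = q @ s" and qne: "q \<noteq> []"
    and W: "tpath x (\<phi> g x) = rev r @ last q # s"
    using split[OF p(1) x gx] by blast
  have "tpath p (\<phi> g x) = map (\<phi> g) (tpath p x)" using tpath_map[OF g p(1) x] p(2) by simp
  then have "q @ s = map (\<phi> g) q @ map (\<phi> g) r" using P Q by simp
  then have qq: "map (\<phi> g) q = q" and ss: "s = map (\<phi> g) r"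
    by (auto simp: append_eq_append_conv)
  have c: "\<phi> g (last q) = last q" using qq qne by (metis last_map)
  have len: "length (tpath x (\<phi> g x)) = 2 * length r + 1" using W ss by simp
  have ls: "length s = length r" using ss by simp
  have m: "mid (tpath x (\<phi> g x)) = last q" unfolding mid_def W using ls
    by (simp add: nth_append)
  have "last q \<in> set (tpath x (\<phi> g x))" using W by simp
  then have "mid (tpath x (\<phi> g x)) \<in> set (tpath x (\<phi> g x))" using m by simp
  then have "mid (tpath x (\<phi> g x)) \<in> V" using tpath[OF x gx] unfolding good_def by blast
  then show ?thesis using len m c by simp
qed

lemma mid_rev: "odd (length l) \<Longrightarrow> mid (rev l) = mid l"
proof -
  assume "odd (length l)"
  then obtain k where k: "length l = 2 * k + 1" by (elim oddE) simp
  then show ?thesis unfolding mid_def by (simp add: rev_nth)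
qed

lemma serre:
  assumes a: "a \<in> carrier G" and b: "b \<in> carrier G"
    and pa: "pa \<in> V" "\<phi> a pa = pa" and pb: "pb \<in> V" "\<phi> b pb = pb"
    and x: "x \<in> V" "\<phi> (a \<otimes>\<^bsub>G\<^esub> b) x = x"
  shows "\<exists>v\<in>V. \<phi> a v = v \<and> \<phi> b v = v"
proof -
  define y where "y = \<phi> b x"
  have y: "y \<in> V" using element_image b x(1) y_def by blast
  have ay: "\<phi> a y = x" using composition_rule[OF x(1) a b] x(2) y_def by simp
  have m1: "odd (length (tpath x y)) \<and> \<phi> b (mid (tpath x y)) = mid (tpath x y) \<and> mid (tpath x y) \<in> V"
    using midpoint[OF b pb x(1)] y_def by simp
  have m2: "\<phi> a (mid (tpath y x)) = mid (tpath y x)"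
    using midpoint[OF a pa y] ay by simp
  have "mid (tpath y x) = mid (tpath x y)" using tpath_rev[OF x(1) y] mid_rev[of "tpath x y"] m1 by simp
  then show ?thesis using m1 m2 by metis
qed

end


context stree begin
lemma dn_refl: "x \<in> V \<Longrightarrow> dn x x = 0"
proof -
  assume x: "x \<in> V"
  have "good x x [x]" using x unfolding good_def by simp
  then have "tpath x x = [x]" using tpath_unique x by blast
  then show ?thesis unfolding dn_def by simp
qed
end

context tact begin
lemma fix_generate:
  assumes S: "S \<subseteq> carrier G" and v: "v \<in> V" and fx: "\<forall>s\<in>S. \<phi> s v = v"
  shows "\<forall>h\<in>generate G S. \<phi> h v = v"
proof
  have grp: "group G" using group_hom unfolding group_hom_def by blast
  fix h assume "h \<in> generate G S"
  then show "\<phi> h v = v"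
  proof (induction h rule: generate.induct)
    case one
    then show ?case using id_eq_one v by (metis restrict_apply')
  next
    case (incl h) then show ?case using fx by blast
  next
    case (inv h)
    have h: "h \<in> carrier G" using inv S by blast
    have "\<phi> (inv\<^bsub>G\<^esub> h) v = \<phi> (inv\<^bsub>G\<^esub> h) (\<phi> h v)" using inv fx by simp
    also have "\<dots> = \<phi> (inv\<^bsub>G\<^esub> h \<otimes>\<^bsub>G\<^esub> h) v"
      using composition_rule[OF v group.inv_closed[OF grp h] h] by simp
    also have "\<dots> = \<phi> \<one>\<^bsub>G\<^esub> v" using group.l_inv[OF grp h] by simp
    also have "\<dots> = v" using id_eq_one v by (metis restrict_apply')
    finally show ?case .
  next
    case (eng h1 h2)
    have "h1 \<in> carrier G" "h2 \<in> carrier G" using eng.hyps group.generate_in_carrier[OF grp S] by auto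
    then show ?case using composition_rule[OF v] eng.IH by simp
  qed
qed
end

theorem corollary2p14:
  fixes G :: "('g, 'b) monoid_scheme" and S :: "'g set"
    and V :: "'v set" and E :: "'v \<Rightarrow> 'v \<Rightarrow> bool" and \<phi> :: "'g \<Rightarrow> 'v \<Rightarrow> 'v"
  assumes "group G"
    and "countable (carrier G)"
    and "S \<subseteq> carrier G"
    and "generate G S = carrier G"
    and "tree_action G V E \<phi>"
    and "acylindrical_action G V (tree_dist V E) \<phi>"
    and "\<forall>s\<in>S. elliptic_element G V \<phi> s"
    and "\<forall>s\<in>S. \<forall>t\<in>S. s \<noteq> t \<longrightarrow> elliptic_element G V \<phi> (s \<otimes>\<^bsub>G\<^esub> t)"
  shows "elliptic_subgroup V \<phi> (carrier G)"
proof -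
  have ta: "simplicial_tree V E" "group_action G V \<phi>"
    "\<forall>g\<in>carrier G. \<forall>x\<in>V. \<forall>y\<in>V. E (\<phi> g x) (\<phi> g y) \<longleftrightarrow> E x y"
    using assms(5) unfolding tree_action_def by auto
  interpret tact G V E \<phi>
    unfolding tact_def tact_axioms_def stree_def using ta by blast
  define Fix where "Fix H = {v\<in>V. \<forall>h\<in>H. \<phi> h v = v}" for H
  have ell: "\<exists>v\<in>V. \<phi> g v = v" if "elliptic_element G V \<phi> g" for g
    using that unfolding elliptic_element_def elliptic_subgroup_def by (meson generate.incl singletonI)
  have pair: "Fix {s} \<inter> Fix {t} \<noteq> {}" if st: "s \<in> S" "t \<in> S" for s t
  proof (cases "s = t")
    case True
    obtain v where "v \<in> V" "\<phi> s v = v" using ell assms(7) st by blast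
    then show ?thesis using True unfolding Fix_def by blast
  next
    case False
    obtain pa where "pa \<in> V" "\<phi> s pa = pa" using ell assms(7) st by blast
    moreover obtain pb where "pb \<in> V" "\<phi> t pb = pb" using ell assms(7) st by blast
    moreover obtain x where "x \<in> V" "\<phi> (s \<otimes>\<^bsub>G\<^esub> t) x = x" using ell assms(8) st False by blast
    ultimately obtain v where "v \<in> V" "\<phi> s v = v" "\<phi> t v = v"
      using serre[of s t] st assms(3) by blast
    then show ?thesis unfolding Fix_def by blast
  qed
  have hel: "\<exists>v\<in>V. \<forall>s\<in>F. \<phi> s v = v" if F: "finite F" "F \<subseteq> S" for F
  proof -
    have "\<exists>v\<in>V. \<forall>A\<in>(\<lambda>s. Fix {s}) ` F. v \<in> A"
    proof (rule helly)
      show "finite ((\<lambda>s. Fix {s}) ` F)" using F by simp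
      show "\<forall>A\<in>(\<lambda>s. Fix {s}) ` F. convex A"
      proof
        fix A assume "A \<in> (\<lambda>s. Fix {s}) ` F"
        then obtain s where "s \<in> F" "A = Fix {s}" by blast
        then show "convex A" using fix_convex[of "{s}"] F assms(3) unfolding Fix_def by auto
      qed
      show "\<forall>A\<in>(\<lambda>s. Fix {s}) ` F. \<forall>B\<in>(\<lambda>s. Fix {s}) ` F. A \<inter> B \<noteq> {}"
        using pair F by blast
    qed
    then show ?thesis unfolding Fix_def by auto
  qed
  have main: "\<exists>v\<in>V. \<forall>s\<in>S. \<phi> s v = v"
  proof (cases "finite S")
    case True then show ?thesis using hel by blast
  next
    case inf: False
    obtain R N where RN: "\<forall>x\<in>V. \<forall>y\<in>V. tree_dist V E x y \<ge> R \<longrightarrow>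
           finite {g \<in> carrier G. tree_dist V E x (\<phi> g x) \<le> 0 \<and> tree_dist V E y (\<phi> g y) \<le> 0} \<and>
           card {g \<in> carrier G. tree_dist V E x (\<phi> g x) \<le> 0 \<and> tree_dist V E y (\<phi> g y) \<le> 0} \<le> N"
      using assms(6)[unfolded acylindrical_action_def, rule_format, of 0, OF order_refl] by blast
    obtain F0 where F0: "finite F0" "card F0 = Suc N" "F0 \<subseteq> S"
      using infinite_arbitrarily_large[OF inf] by blast
    have bnd: "real (dn x y) < R" if xy: "x \<in> Fix F0" "y \<in> Fix F0" for x y
    proof (rule ccontr)
      assume "\<not> real (dn x y) < R"
      then have "tree_dist V E x y \<ge> R" using tree_dist_dn xy unfolding Fix_def by auto
      then have fc: "finite {g \<in> carrier G. tree_dist V E x (\<phi> g x) \<le> 0 \<and> tree_dist V E y (\<phi> g y) \<le> 0} \<and>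
           card {g \<in> carrier G. tree_dist V E x (\<phi> g x) \<le> 0 \<and> tree_dist V E y (\<phi> g y) \<le> 0} \<le> N"
        using RN xy unfolding Fix_def by blast
      have "F0 \<subseteq> {g \<in> carrier G. tree_dist V E x (\<phi> g x) \<le> 0 \<and> tree_dist V E y (\<phi> g y) \<le> 0}"
        using xy F0(3) assms(3) tree_dist_dn dn_refl unfolding Fix_def by auto
      then have "card F0 \<le> card {g \<in> carrier G. tree_dist V E x (\<phi> g x) \<le> 0 \<and> tree_dist V E y (\<phi> g y) \<le> 0}"
        by (rule card_mono[OF fc[THEN conjunct1]])
      then have "card F0 \<le> N" using fc[THEN conjunct2] by (rule order_trans)
      then show False using F0 by simp
    qed
    obtain x0 where x0: "x0 \<in> Fix F0" using hel[OF F0(1,3)] unfolding Fix_def by blast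
    have x0V: "x0 \<in> V" using x0 unfolding Fix_def by blast
    define kF where "kF F = (LEAST n. \<exists>w\<in>Fix F. dn x0 w = n)" for F
    define P where "P F \<longleftrightarrow> finite F \<and> F0 \<subseteq> F \<and> F \<subseteq> S" for F
    have kw: "\<exists>w\<in>Fix F. dn x0 w = kF F" if PF: "P F" for F
    proof -
      have "finite F" "F \<subseteq> S" using PF unfolding P_def by auto
      then obtain w where "w \<in> Fix F" using hel unfolding Fix_def by blast
      then have "\<exists>n. \<exists>w\<in>Fix F. dn x0 w = n" by blast
      from LeastI_ex[OF this] show ?thesis unfolding kF_def .
    qed
    have kle: "kF F \<le> dn x0 w" if "w \<in> Fix F" for F w
      unfolding kF_def using that by (intro Least_le) blast
    have kb: "kF F < nat \<lceil>R\<rceil>" if PF: "P F" for F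
    proof -
      obtain w where w: "w \<in> Fix F" "dn x0 w = kF F" using kw[OF PF] by blast
      have "w \<in> Fix F0" using w(1) PF unfolding P_def Fix_def by blast
      then have "real (dn x0 w) < R" by (rule bnd[OF x0])
      then have "real (kF F) < R" using w(2) by simp
      then have "real (kF F) < real (nat \<lceil>R\<rceil>)" using real_nat_ceiling_ge[of R] by linarith
      then show ?thesis by simp
    qed
    have "P F0" unfolding P_def using F0 by blast
    then obtain F2 where F2: "P F2" "\<forall>F. P F \<longrightarrow> kF F \<le> kF F2"
      using ex_has_greatest_nat[of P F0 kF "nat \<lceil>R\<rceil>"] kb by blast
    obtain z where z: "z \<in> Fix F2" "dn x0 z = kF F2" using kw F2(1) by blast
    have cvx: "convex (Fix F2)" unfolding Fix_def using fix_convex F2(1) assms(3) unfolding P_def by blast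
    have "\<phi> s z = z" if s: "s \<in> S" for s
    proof -
      have PF: "P (insert s F2)" using F2(1) s unfolding P_def by auto
      obtain w where w: "w \<in> Fix (insert s F2)" "dn x0 w = kF (insert s F2)" using kw PF by blast
      have w2: "w \<in> Fix F2" using w(1) unfolding Fix_def by blast
      have "dn x0 w = kF F2" using kle[OF w2] F2(2) PF w(2) by fastforce
      then have "w = z" using nearest_unique[OF cvx x0V w2 z(1) _ z(2)] kle by blast
      then show ?thesis using w(1) unfolding Fix_def by blast
    qed
    then show ?thesis using z unfolding Fix_def by blast
  qed
  then obtain v where v: "v \<in> V" "\<forall>s\<in>S. \<phi> s v = v" by blast
  then show ?thesis unfolding elliptic_subgroup_def using fix_generate[OF assms(3) v] assms(4) by auto
qed


end
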